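(* Let $n$ be an integer and let $\omega\in\mathbb C$ be a root of $\Delta_n=S_n'S_{n-1}-S_nS_{n-1}'$. If $n>0$ then $|h_n(\omega)|>1$, and if $n<0$ then $|h_n(\omega)|<1$, where $h_n=S_n/S_{n-1}$.
   Context: The Chebyshev polynomials $S_j(\omega)$ are defined for all integers $j$ by $S_0=1$, $S_1=\omega$, $S_{j+1}=\omega S_j-S_{j-1}$; primes denote derivatives with respect to $\omega$. *)

theory Defs
  imports "HOL-Computational_Algebra.Polynomial" Complex_Main
begin

fun cheb_S_nat :: "nat \<Rightarrow> complex poly" where
  "cheb_S_nat 0 = 1"
| "cheb_S_nat (Suc 0) = [:0, 1:]"
| "cheb_S_nat (Suc (Suc n)) = [:0, 1:] * cheb_S_nat (Suc n) - cheb_S_nat n"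

text \<open>Extension to all integers j by running the recurrence backwards:
  S_(-1) = 0 and S_(-k) = - S_(k-2) for k >= 2.\<close>
definition cheb_S :: "int \<Rightarrow> complex poly" where
  "cheb_S j = (if j \<ge> 0 then cheb_S_nat (nat j)
               else if j = -1 then 0 else - cheb_S_nat (nat (- j - 2)))"

definition Delta :: "int \<Rightarrow> complex poly" where
  "Delta n = pderiv (cheb_S n) * cheb_S (n - 1) - cheb_S n * pderiv (cheb_S (n - 1))"

definition h :: "int \<Rightarrow> complex \<Rightarrow> complex" where
  "h n w = poly (cheb_S n) w / poly (cheb_S (n - 1)) w"

end

theory Submission imports Defs begin

lemma pd_X: "pderiv [:0,1::complex:] = 1"
  by (simp add: pderiv_pCons)

lemma ring_aux:
  fixes x a b c da db dc :: "'a::comm_ring_1"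
  assumes "c = x*b - a" "dc = b + x*db - da"
  shows "dc*b - c*db = b^2 + (db*a - b*da)"
  unfolding assms by (simp add: algebra_simps power2_eq_square)

lemma sq_aux:
  fixes A B :: "'a::comm_ring_1"
  assumes "A*B = 1" shows "(A-B)^2 = A*A + B*B - 2"
proof -
  have "(A-B)^2 = A*A + B*B - 2*(A*B)" by (simp add: algebra_simps power2_eq_square)
  then show ?thesis using assms by simp
qed

lemma christoffel:
  "pderiv (cheb_S_nat (Suc n)) * cheb_S_nat n - cheb_S_nat (Suc n) * pderiv (cheb_S_nat n)
   = (\<Sum>k\<le>n. cheb_S_nat k ^ 2)"
proof (induction n)
  case 0
  then show ?case by (simp add: pd_X)
next
  case (Suc n)
  have e1: "cheb_S_nat (Suc (Suc n)) = [:0,1:] * cheb_S_nat (Suc n) - cheb_S_nat n" by simp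
  have e2: "pderiv (cheb_S_nat (Suc (Suc n))) = cheb_S_nat (Suc n) + [:0,1:] * pderiv (cheb_S_nat (Suc n)) - pderiv (cheb_S_nat n)"
    by (subst e1, simp only: pderiv_mult pderiv_diff pd_X) simp
  have "pderiv (cheb_S_nat (Suc (Suc n))) * cheb_S_nat (Suc n) - cheb_S_nat (Suc (Suc n)) * pderiv (cheb_S_nat (Suc n))
     = cheb_S_nat (Suc n) ^ 2 + (pderiv (cheb_S_nat (Suc n)) * cheb_S_nat n - cheb_S_nat (Suc n) * pderiv (cheb_S_nat n))"
    by (rule ring_aux[OF e1 e2])
  then show ?case using Suc by simp
qed

lemma pow_cancel: "t * s = (1::complex) \<Longrightarrow> s ^ m * t ^ (m + k) = t ^ k"
  by (simp add: power_add mult.assoc[symmetric] power_mult_distrib[symmetric] mult.commute)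

lemma cheb_t:
  assumes "t * s = (1::complex)"
  shows "poly (cheb_S_nat k) (t + s) * (t - s) = t ^ (k+1) - s ^ (k+1)"
proof (induction k rule: cheb_S_nat.induct)
  case 1 then show ?case by simp
next
  case 2 then show ?case using assms by (simp add: algebra_simps power2_eq_square)
next
  case (3 n)
  have e1: "s * t ^ (n+2) = t ^ (n+1)" using pow_cancel[OF assms, of 1 "n+1"] by simp
  have e2: "t * s ^ (n+2) = s ^ (n+1)" using pow_cancel[of s t 1 "n+1"] assms by (simp add: mult.commute)
  have "poly (cheb_S_nat (Suc (Suc n))) (t + s) * (t - s)
      = (t + s) * (poly (cheb_S_nat (Suc n)) (t + s) * (t - s)) - poly (cheb_S_nat n) (t + s) * (t - s)"
    by (simp add: algebra_simps)
  also have "\<dots> = (t + s) * (t^(n+2) - s^(n+2)) - (t^(n+1) - s^(n+1))"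
    using 3 by simp
  also have "\<dots> = t^(n+3) - s^(n+3) + (s * t ^ (n+2) - t ^ (n+1)) - (t * s ^ (n+2) - s ^ (n+1))"
    by (simp add: algebra_simps power_add power2_eq_square power3_eq_cube)
  also have "\<dots> = t^(n+3) - s^(n+3)" unfolding e1 e2 by simp
  finally show ?case by (simp add: numeral_eq_Suc)
qed

lemma al1: fixes t u c :: complex assumes "t*t = 1"
  shows "2*t*((c+1)*(t*u)) - c*u = (c+2)*(t*t*u)" using assms by algebra
lemma al2: fixes t s u v c :: complex assumes "t*s = 1" "u*v=1"
  shows "t*u*u - s*v*v - c*(t-s) + (t-s)*(t*u - s*v)^2 = t*t*t*u*u - s*s*s*v*v - (c+2)*(t-s)" using assms by algebra

lemma cheb_pm2:
  assumes "t^2 = (1::complex)"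
  shows "poly (cheb_S_nat k) (2*t) = of_nat (k+1) * t ^ k"
proof (induction k rule: cheb_S_nat.induct)
  case 1 then show ?case by simp
next
  case 2 then show ?case using assms by (simp add: power2_eq_square)
next
  case (3 n)
  have p1: "t^(n+1) = t * t^n" "t^(n+2) = t*t*t^n" by simp_all
  have tt: "t*t = 1" using assms by (simp add: power2_eq_square)
  have c: "(of_nat (n+3)::complex) = of_nat (n+1) + 2" "(of_nat (n+2)::complex) = of_nat (n+1) + 1" by simp_all
  have "poly (cheb_S_nat (Suc (Suc n))) (2*t) = 2*t*(of_nat (n+2) * t^(n+1)) - of_nat (n+1) * t^n"
    using 3 by simp
  also have "\<dots> = of_nat (n+3) * t^(n+2)" unfolding p1 c by (rule al1[OF tt])
  finally show ?case by (simp add: numeral_eq_Suc)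
qed

lemma telesum:
  assumes "t * s = (1::complex)"
  shows "(t - s) * (\<Sum>k<n. (t^(k+1) - s^(k+1))^2) = t^(2*n+1) - s^(2*n+1) - of_nat (2*n+1) * (t - s)"
proof (induction n)
  case 0 then show ?case by simp
next
  case (Suc n)
  have uv: "t^n * s^n = 1" using assms by (metis power_mult_distrib power_one)
  have p: "t^(n+1) = t*t^n" "s^(n+1) = s*s^n" "t^(2*n+1) = t*t^n*t^n" "s^(2*n+1) = s*s^n*s^n"
     "t^(2*Suc n+1) = t*t*t*t^n*t^n" "s^(2*Suc n+1) = s*s*s*s^n*s^n"
    by (simp_all add: power_add mult_2 power_Suc)
  have c: "(of_nat (2*Suc n+1)::complex) = of_nat (2*n+1) + 2" by simp
  have "(t - s) * (\<Sum>k<Suc n. (t^(k+1) - s^(k+1))^2)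
      = (t - s) * (\<Sum>k<n. (t^(k+1) - s^(k+1))^2) + (t-s) * (t^(n+1) - s^(n+1))^2"
    by (simp add: algebra_simps)
  also have "\<dots> = t^(2*n+1) - s^(2*n+1) - of_nat (2*n+1) * (t - s) + (t-s) * (t^(n+1) - s^(n+1))^2"
    using Suc by simp
  also have "\<dots> = t^(2*Suc n+1) - s^(2*Suc n+1) - of_nat (2*Suc n+1) * (t - s)"
    unfolding p c by (rule al2[OF assms uv])
  finally show ?case .
qed

lemma core_ineq:
  fixes t s T S :: complex and c :: real and m :: nat
  assumes ts: "t*s=1" and TS: "T*S=1" and ne: "t\<noteq>s" and con: "T - S = of_real c * (t - s)"
    and c: "c>0" and Tm: "T = t^m" and m: "m\<ge>1"
  shows "cmod (T - t) < cmod (t*T - 1)"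
proof -
  have sinv: "s = inverse t" using ts by (metis inverse_unique)
  have Sinv: "S = inverse T" using TS by (metis inverse_unique)
  define a b p q where "a = Re t" "b = Im t" "p = Re T" "q = Im T"
  define r1 r2 where "r1 = a^2 + b^2" "r2 = p^2+q^2"
  have t0: "t \<noteq> 0" using ts by auto
  have T0: "T \<noteq> 0" using TS by auto
  have r1p: "r1 > 0" using t0 unfolding r1_r2_def a_b_p_q_def
    by (metis add_nonneg_pos add_pos_nonneg complex_eqI not_less_iff_gr_or_eq sum_power2_gt_zero_iff zero_complex.simps)
  have r2p: "r2 > 0" using T0 unfolding r1_r2_def a_b_p_q_def
    by (metis add_nonneg_pos add_pos_nonneg complex_eqI not_less_iff_gr_or_eq sum_power2_gt_zero_iff zero_complex.simps)
  have r2m: "r2 = r1 ^ m"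
  proof -
    have "cmod T = cmod t ^ m" using Tm by (simp add: norm_power)
    then have "(cmod T)^2 = ((cmod t)^2)^m" by (simp add: power_mult[symmetric] mult.commute)
    then show ?thesis unfolding r1_r2_def a_b_p_q_def cmod_power2 .
  qed
  have imcon: "q + q / r2 = c * (b + b / r1)"
  proof -
    have "Im (T - S) = Im (of_real c * (t - s))" using con by simp
    then show ?thesis unfolding sinv Sinv r1_r2_def a_b_p_q_def by simp
  qed
  have bq: "b*q*(1 + 1/r2) = c * b^2 * (1 + 1/r1)"
  proof -
    have "b*(q + q/r2) = b*(c * (b + b / r1))" using imcon by simp
    then show ?thesis by (simp add: algebra_simps power2_eq_square)
  qed
  have bq0: "b*q \<ge> 0"
  proof -
    have "c * b^2 * (1 + 1/r1) \<ge> 0" using c r1p by (simp add: add_pos_pos)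
    moreover have "1 + 1/r2 > 0" using r2p by (simp add: add_pos_pos)
    ultimately show ?thesis using bq by (metis zero_le_mult_iff not_less)
  qed
  have diff: "(cmod (t*T - 1))^2 - (cmod (T - t))^2 = (r1 - 1)*(r2 - 1) + 4*b*q"
    unfolding cmod_power2 r1_r2_def a_b_p_q_def by (simp add: power2_eq_square algebra_simps)
  have pos: "(r1 - 1)*(r2 - 1) + 4*b*q > 0"
  proof (cases "b = 0")
    case True
    have "r1 \<noteq> 1"
    proof
      assume "r1 = 1"
      then have "a^2 = 1" using True unfolding r1_r2_def by simp
      then have "a = 1 \<or> a = -1" by (simp add: power2_eq_1_iff)
      then have "t = 1 \<or> t = -1" using True unfolding a_b_p_q_def by (auto simp: complex_eq_iff)
      then show False using ne sinv by auto
    qed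
    then have "r1 < 1 \<or> r1 > 1" by auto
    then have "(r1 - 1)*(r2 - 1) > 0"
    proof
      assume "r1 < 1"
      then have "r2 < 1" unfolding r2m using m r1p by (simp add: power_less_one_iff)
      then show ?thesis using \<open>r1<1\<close> by (simp add: mult_neg_neg)
    next
      assume "r1 > 1"
      then have "r2 > 1" unfolding r2m using m by (simp add: one_less_power)
      then show ?thesis using \<open>r1>1\<close> by simp
    qed
    then show ?thesis using bq0 by simp
  next
    case False
    have "b*q \<noteq> 0"
    proof
      assume "b*q = 0"
      then have "c * b^2 * (1 + 1/r1) = 0" using bq by (metis mult_zero_left)
      moreover have "1 + 1/r1 > 0" using r1p by (simp add: add_pos_pos)
      ultimately show False using c False by simp
    qed
    then have "b*q > 0" using bq0 by linarith
    moreover have "(r1 - 1)*(r2 - 1) \<ge> 0"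
    proof (cases "r1 \<le> 1")
      case True
      then have "r2 \<le> 1" unfolding r2m using r1p by (simp add: power_le_one)
      then show ?thesis using True by (simp add: mult_nonpos_nonpos)
    next
      case False
      then have "r2 \<ge> 1" unfolding r2m by (simp add: one_le_power)
      then show ?thesis using False by simp
    qed
    ultimately show ?thesis by simp
  qed
  have "(cmod (T - t))^2 < (cmod (t*T - 1))^2" using diff pos by simp
  then show ?thesis by (simp add: power2_less_imp_less)
qed

lemma pos_case:
  fixes \<omega> :: complex
  assumes "poly (pderiv (cheb_S_nat (Suc j)) * cheb_S_nat j - cheb_S_nat (Suc j) * pderiv (cheb_S_nat j)) \<omega> = 0"
  shows "cmod (poly (cheb_S_nat (Suc j)) \<omega> / poly (cheb_S_nat j) \<omega>) > 1"
proof -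
  define d where "d = csqrt (\<omega>^2 - 4)"
  define t s where "t = (\<omega> + d)/2" "s = (\<omega> - d)/2"
  have dd: "d^2 = \<omega>^2 - 4" unfolding d_def by simp
  have ts: "t*s = 1"
  proof -
    have "t*s = (\<omega>^2 - d^2)/4" unfolding t_s_def by (simp add: power2_eq_square algebra_simps)
    then show ?thesis using dd by simp
  qed
  have w: "\<omega> = t + s" unfolding t_s_def by (simp add: field_simps)
  have sum0: "(\<Sum>k\<le>j. poly (cheb_S_nat k) \<omega> ^2) = 0"
    using assms unfolding christoffel by (simp add: poly_sum poly_power)
  have tns: "t \<noteq> s"
  proof
    assume "t = s"
    then have tt: "t^2 = 1" using ts by (simp add: power2_eq_square)
    have w2: "\<omega> = 2*t" using w \<open>t = s\<close> by simp
    have "(\<Sum>k\<le>j. poly (cheb_S_nat k) \<omega> ^2) = (\<Sum>k\<le>j. of_nat ((k+1)^2))"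
    proof (rule sum.cong)
      fix k assume "k \<in> {..j}"
      have "poly (cheb_S_nat k) \<omega> ^2 = of_nat (k+1)^2 * (t^2)^k"
        unfolding w2 cheb_pm2[OF tt] by (simp add: power_mult_distrib power_mult[symmetric] mult.commute)
      then show "poly (cheb_S_nat k) \<omega> ^2 = of_nat ((k+1)^2)" using tt by simp
    qed simp
    also have "\<dots> = of_nat (\<Sum>k\<le>j. (k+1)^2)" by simp
    finally have "(\<Sum>k\<le>j. ((k::nat)+1)^2) = 0" using sum0 by (metis of_nat_eq_0_iff)
    moreover have "(\<Sum>k\<le>j. ((k::nat)+1)^2) > 0"
      by (rule sum_pos2[of _ 0]) auto
    ultimately show False by linarith
  qed
  define T S where "T = t^(2*j+3)" "S = s^(2*j+3)"
  have TS: "T*S = 1" unfolding T_S_def using ts by (metis power_mult_distrib power_one)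
  have "(t - s) * (\<Sum>k<Suc j. (t^(k+1) - s^(k+1))^2) = T - S - of_nat (2*j+3) * (t - s)"
    using telesum[OF ts, of "Suc j"] unfolding T_S_def by (simp add: numeral_eq_Suc)
  moreover have "(\<Sum>k<Suc j. (t^(k+1) - s^(k+1))^2) = 0"
  proof -
    have "(\<Sum>k<Suc j. (t^(k+1) - s^(k+1))^2) = (\<Sum>k\<le>j. (t-s)^2 * poly (cheb_S_nat k) \<omega> ^2)"
      unfolding lessThan_Suc_atMost
    proof (rule sum.cong)
      fix k
      have "poly (cheb_S_nat k) \<omega> * (t - s) = t^(k+1) - s^(k+1)" unfolding w by (rule cheb_t[OF ts])
      then show "(t^(k+1) - s^(k+1))^2 = (t-s)^2 * poly (cheb_S_nat k) \<omega> ^2"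
        by (metis power_mult_distrib mult.commute)
    qed simp
    also have "\<dots> = 0" using sum0 by (simp add: sum_distrib_left[symmetric])
    finally show ?thesis .
  qed
  ultimately have con: "T - S = of_real (real (2*j+3)) * (t - s)" by simp
  have ineq: "cmod (T - t) < cmod (t*T - 1)"
    by (rule core_ineq[OF ts TS tns con, of "2*j+3"]) (auto simp: T_S_def)
  have sinv: "s = inverse t" using ts by (metis inverse_unique)
  have Sinv: "S = inverse T" using TS by (metis inverse_unique)
  have Tt: "T - t \<noteq> 0"
  proof
    assume "T - t = 0"
    then have "T = t" by simp
    then have "S = s" using sinv Sinv by simp
    then have "(of_nat (2*j+3) - 1) * (t - s) = 0" using con \<open>T = t\<close> by (simp add: algebra_simps)
    moreover have "(of_nat (2*j+3) - 1 :: complex) = of_nat (2*j+2)" by simp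
    moreover have "of_nat (2*j+2) \<noteq> (0::complex)" by (simp only: of_nat_eq_0_iff)
    ultimately have "of_nat (2*j+2) * (t - s) = 0" "of_nat (2*j+2) \<noteq> (0::complex)" by simp_all
    then show False using tns by simp
  qed
  have s0: "s \<noteq> 0" using ts by auto
  have e1: "(t - s) * poly (cheb_S_nat (Suc j)) \<omega> = s^(j+2) * (t*T - 1)"
  proof -
    have x: "(j+2)+(j+2) = Suc (2*j+3)" by simp
    have "t*T = t^((j+2)+(j+2))" by (simp only: x power_Suc T_S_def)
    have "s^(j+2) * (t*T) = t^(j+2)" unfolding \<open>t*T = _\<close> by (rule pow_cancel[OF ts])
    then have "s^(j+2) * (t*T - 1) = t^(j+2) - s^(j+2)" by (simp add: right_diff_distrib)
    moreover have "(t - s) * poly (cheb_S_nat (Suc j)) \<omega> = t^(Suc j+1) - s^(Suc j+1)"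
      using cheb_t[OF ts, of "Suc j"] w by (simp only: mult.commute)
    moreover have "Suc j + 1 = j+2" by simp
    ultimately show ?thesis by simp
  qed
  have e2: "(t - s) * poly (cheb_S_nat j) \<omega> = s^(j+2) * (T - t)"
  proof -
    have x: "(j+2)+(j+1) = 2*j+3" by simp
    have "T = t^((j+2)+(j+1))" by (simp only: x T_S_def)
    then have a: "s^(j+2) * T = t^(j+1)" by (simp only: pow_cancel[OF ts])
    have "t * s^(1+(j+1)) = s^(j+1)" using pow_cancel[of s t 1 "j+1"] ts by (simp add: mult.commute)
    moreover have "1+(j+1) = j+2" by simp
    ultimately have b: "s^(j+2) * t = s^(j+1)" by (simp add: mult.commute)
    have "s^(j+2) * (T - t) = t^(j+1) - s^(j+1)" using a b by (simp add: right_diff_distrib)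
    moreover have "(t - s) * poly (cheb_S_nat j) \<omega> = t^(j+1) - s^(j+1)"
      using cheb_t[OF ts, of j] w by (simp only: mult.commute)
    ultimately show ?thesis by simp
  qed
  have "poly (cheb_S_nat (Suc j)) \<omega> / poly (cheb_S_nat j) \<omega>
      = ((t - s) * poly (cheb_S_nat (Suc j)) \<omega>) / ((t - s) * poly (cheb_S_nat j) \<omega>)"
    using tns by simp
  also have "\<dots> = (t*T - 1) / (T - t)" unfolding e1 e2 using s0 by simp
  finally have "cmod (poly (cheb_S_nat (Suc j)) \<omega> / poly (cheb_S_nat j) \<omega>) = cmod (t*T - 1) / cmod (T - t)"
    by (simp add: norm_divide)
  also have "\<dots> > 1" using ineq Tt by simp
  finally show ?thesis .
qed

theorem lemma5p4:
  fixes n :: int and \<omega> :: complex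
  assumes "poly (Delta n) \<omega> = 0"
  shows "(n > 0 \<longrightarrow> cmod (h n \<omega>) > 1) \<and> (n < 0 \<longrightarrow> cmod (h n \<omega>) < 1)"
proof (intro conjI impI)
  assume "n > 0"
  then obtain j where nj: "n = int (Suc j)" by (metis gr0_implies_Suc pos_int_cases)
  have x: "nat (1 + int j) = Suc j" by linarith
  have c1: "cheb_S n = cheb_S_nat (Suc j)" unfolding cheb_S_def nj using x by simp
  have c2: "cheb_S (n - 1) = cheb_S_nat j" unfolding cheb_S_def nj by simp
  have "poly (pderiv (cheb_S_nat (Suc j)) * cheb_S_nat j - cheb_S_nat (Suc j) * pderiv (cheb_S_nat j)) \<omega> = 0"
    using assms unfolding Delta_def c1 c2 .
  then show "cmod (h n \<omega>) > 1" unfolding h_def c1 c2 by (rule pos_case)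
next
  assume "n < 0"
  show "cmod (h n \<omega>) < 1"
  proof (cases "n = -1")
    case True
    then show ?thesis unfolding h_def cheb_S_def by simp
  next
    case False
    then obtain j where nj: "n = - int j - 2" using \<open>n < 0\<close>
    proof -
      have "n = - int (nat (- n - 2)) - 2" using \<open>n < 0\<close> False by linarith
      then show ?thesis using that by blast
    qed
    have c1: "cheb_S n = - cheb_S_nat j" unfolding cheb_S_def nj by simp
    have c2: "cheb_S (n - 1) = - cheb_S_nat (Suc j)"
    proof -
      have "nat (- (n - 1) - 2) = Suc j" unfolding nj by simp
      then show ?thesis unfolding cheb_S_def nj by simp
    qed
    have "poly (pderiv (cheb_S_nat (Suc j)) * cheb_S_nat j - cheb_S_nat (Suc j) * pderiv (cheb_S_nat j)) \<omega>
       = - poly (Delta n) \<omega>"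
      unfolding Delta_def c1 c2 by (simp add: pderiv_minus algebra_simps)
    then have "poly (pderiv (cheb_S_nat (Suc j)) * cheb_S_nat j - cheb_S_nat (Suc j) * pderiv (cheb_S_nat j)) \<omega> = 0"
      using assms by simp
    then have g: "cmod (poly (cheb_S_nat (Suc j)) \<omega> / poly (cheb_S_nat j) \<omega>) > 1" by (rule pos_case)
    have "h n \<omega> = poly (cheb_S_nat j) \<omega> / poly (cheb_S_nat (Suc j)) \<omega>"
      unfolding h_def c1 c2 by simp
    then have "cmod (h n \<omega>) = inverse (cmod (poly (cheb_S_nat (Suc j)) \<omega> / poly (cheb_S_nat j) \<omega>))"
      by (simp add: norm_divide)
    then show ?thesis using g by (simp add: inverse_less_1_iff)
  qed
qed

end
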